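(* Let $\Gamma=(V,E)$ be a finite, simple, acyclic, modular directed graph, and let $H\subseteq E$ be a set of edges that is ample and connected. Then $H$ is sufficient, i.e. the completion $\hat H$ of $H$ contains a directed path from a source of $\Gamma$ to a sink of $\Gamma$.
   Context: A directed graph $\Gamma=(V,E)$ assigns to each edge $e$ a tail $t(e)$ and a head $h(e)$; it is simple if edges with the same tail and head coincide, and acyclic if it has no directed path of positive length from a vertex to itself. A directed (positive) path is a sequence of edges $e_1,\dots,e_k$ with $t(e_{i+1})=h(e_i)$; a vertex is regarded as joined to itself by the path of length $0$. A source is a vertex that is the head of no edge; a sink is a vertex that is the tail of no edge. $\Gamma$ is modular if (1) for any two distinct edges $e_1,e_2$ with a common tail there exist edges $f_1,f_2$ with a common head and $h(e_i)=t(f_i)$, $i=1,2$; and (2) for any two distinct edges $h_1,h_2$ with a common head there exist edges $g_1,g_2$ with a common tail and $h(g_i)=t(h_i)$, $i=1,2$. D-operation: from a pair of distinct edges $e_1,e_2$ with a common tail, any pair of edges $f_1,f_2$ with a common head and $h(e_i)=t(f_i)$ is obtained. U-operation: from a pair of distinct edges $f_1',f_2'$ with a common head, any pair $e_1',e_2'$ with a common tail and $h(e_i')=t(f_i')$ is obtained. A set $E_0\subseteq E$ is complete if every result of any D- or U-operation applied to edges of $E_0$ lies in $E_0$; the completion $\hat F$ of $F\subseteq E$ is the smallest complete set containing $F$. A set of edges is sufficient if its completion contains a directed path all of whose edges lie in it, from a source to a sink of $\Gamma$. For $G\subseteq E$ let $V(G)$ be the set of heads and tails of edges in $G$. A set $W\subseteq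 V$ is ample if (1) for every non-sink vertex $v$ there is $u\in W$ such that there is no directed path in $\Gamma$ from $u$ to $v$, and (2) for every non-source vertex $v$ there is $w\in W$ such that there is no directed path in $\Gamma$ from $v$ to $w$; a set of edges $G$ is ample if $V(G)$ is ample. A set of edges $G$ is connected if the undirected graph with vertex set $V(G)$ and edge set $G$ (directions forgotten) is connected. *)

theory Defs
  imports Main
begin

text \<open>A simple directed graph is given by a vertex set V and an edge relation
E \<subseteq> V \<times> V; an edge e = (u,v) has tail fst e = u and head snd e = v.
Simplicity (edges with equal tail and head coincide) is built into this
representation.\<close>

definition dgraph :: "'a set \<Rightarrow> ('a \<times> 'a) set \<Rightarrow> bool" where
  "dgraph V E \<longleftrightarrow> E \<subseteq> V \<times> V"

definition is_source :: "'a set \<Rightarrow> ('a \<times> 'a) set \<Rightarrow> 'a \<Rightarrow> bool" where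
  "is_source V E v \<longleftrightarrow> v \<in> V \<and> (\<forall>e\<in>E. snd e \<noteq> v)"

definition is_sink :: "'a set \<Rightarrow> ('a \<times> 'a) set \<Rightarrow> 'a \<Rightarrow> bool" where
  "is_sink V E v \<longleftrightarrow> v \<in> V \<and> (\<forall>e\<in>E. fst e \<noteq> v)"

definition modular :: "('a \<times> 'a) set \<Rightarrow> bool" where
  "modular E \<longleftrightarrow>
     (\<forall>e1\<in>E. \<forall>e2\<in>E. e1 \<noteq> e2 \<and> fst e1 = fst e2 \<longrightarrow>
        (\<exists>f1\<in>E. \<exists>f2\<in>E. snd f1 = snd f2 \<and> snd e1 = fst f1 \<and> snd e2 = fst f2)) \<and>
     (\<forall>h1\<in>E. \<forall>h2\<in>E. h1 \<noteq> h2 \<and> snd h1 = snd h2 \<longrightarrow>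
        (\<exists>g1\<in>E. \<exists>g2\<in>E. fst g1 = fst g2 \<and> snd g1 = fst h1 \<and> snd g2 = fst h2))"

text \<open>Completeness: closed under all D- and U-operations (results taken in E).\<close>
definition complete_set :: "('a \<times> 'a) set \<Rightarrow> ('a \<times> 'a) set \<Rightarrow> bool" where
  "complete_set E E0 \<longleftrightarrow> E0 \<subseteq> E \<and>
     (\<forall>e1\<in>E0. \<forall>e2\<in>E0. \<forall>f1\<in>E. \<forall>f2\<in>E.
        e1 \<noteq> e2 \<and> fst e1 = fst e2 \<and> snd f1 = snd f2 \<and> snd e1 = fst f1 \<and> snd e2 = fst f2
        \<longrightarrow> f1 \<in> E0 \<and> f2 \<in> E0) \<and>
     (\<forall>f1\<in>E0. \<forall>f2\<in>E0. \<forall>e1\<in>E. \<forall>e2\<in>E.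
        f1 \<noteq> f2 \<and> snd f1 = snd f2 \<and> fst e1 = fst e2 \<and> snd e1 = fst f1 \<and> snd e2 = fst f2
        \<longrightarrow> e1 \<in> E0 \<and> e2 \<in> E0)"

text \<open>Completion: the smallest complete set containing F (intersection of all
complete supersets; complete sets are closed under intersection).\<close>
definition completion :: "('a \<times> 'a) set \<Rightarrow> ('a \<times> 'a) set \<Rightarrow> ('a \<times> 'a) set" where
  "completion E F = \<Inter> {E0. complete_set E E0 \<and> F \<subseteq> E0}"

text \<open>Sufficient: the completion contains a directed path (possibly of length 0)
from a source to a sink; a path with all edges in a set S from s to t exists
iff (s,t) is in the reflexive-transitive closure of S.\<close>
definition sufficient :: "'a set \<Rightarrow> ('a \<times> 'a) set \<Rightarrow> ('a \<times> 'a) set \<Rightarrow> bool" where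
  "sufficient V E F \<longleftrightarrow>
     (\<exists>s t. is_source V E s \<and> is_sink V E t \<and> (s, t) \<in> (completion E F)\<^sup>*)"

definition verts_of :: "('a \<times> 'a) set \<Rightarrow> 'a set" where
  "verts_of G = fst ` G \<union> snd ` G"

definition ample_vset :: "'a set \<Rightarrow> ('a \<times> 'a) set \<Rightarrow> 'a set \<Rightarrow> bool" where
  "ample_vset V E W \<longleftrightarrow>
     (\<forall>v\<in>V. \<not> is_sink V E v \<longrightarrow> (\<exists>u\<in>W. (u, v) \<notin> E\<^sup>*)) \<and>
     (\<forall>v\<in>V. \<not> is_source V E v \<longrightarrow> (\<exists>w\<in>W. (v, w) \<notin> E\<^sup>*))"

definition ample_edges :: "'a set \<Rightarrow> ('a \<times> 'a) set \<Rightarrow> ('a \<times> 'a) set \<Rightarrow> bool" where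
  "ample_edges V E G \<longleftrightarrow> ample_vset V E (verts_of G)"

definition connected_edges :: "('a \<times> 'a) set \<Rightarrow> bool" where
  "connected_edges G \<longleftrightarrow> G \<noteq> {} \<and>
     (\<forall>u\<in>verts_of G. \<forall>v\<in>verts_of G. (u, v) \<in> (G \<union> G\<inverse>)\<^sup>*)"

end

theory Submission
  imports Defs
begin

lemma core_aux:
  assumes CE: "C \<subseteq> E"
    and D: "\<And>a b c. (a,b)\<in>C \<Longrightarrow> (a,c)\<in>C \<Longrightarrow> b\<noteq>c \<Longrightarrow> \<exists>z. (b,z)\<in>C \<and> (c,z)\<in>C"
  shows "\<And>x t k u m. k + m = L \<Longrightarrow> (x,t) \<in> C^^k \<Longrightarrow> (x,u) \<in> (C \<union> C\<inverse>)^^m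
          \<Longrightarrow> (u,t) \<notin> E\<^sup>* \<Longrightarrow> \<exists>y. (t,y) \<in> C"
proof (induction L rule: less_induct)
  case (less L)
  have F: "\<And>x y t u m'. kk + 1 + m' = L \<Longrightarrow> (x,t) \<in> C^^kk \<Longrightarrow> (x,y) \<in> C
     \<Longrightarrow> (y,u) \<in> (C \<union> C\<inverse>)^^m' \<Longrightarrow> (u,t) \<notin> E\<^sup>* \<Longrightarrow> \<exists>y. (t,y)\<in>C" for kk
  proof (induction kk)
    case 0
    then show ?case by auto
  next
    case (Suc j)
    from Suc.prems(2) obtain x' where xx': "(x,x')\<in>C" and x't: "(x',t)\<in>C^^j"
      using relpow_Suc_D2 by metis
    show ?case
    proof (cases "y = x'")
      case True
      show ?thesis
        using less.IH[where y="j + m'" and x=x' and t=t and k=j and u=u and m=m'] Suc.prems x't True by auto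
    next
      case False
      then obtain z where z1: "(x',z)\<in>C" and z2: "(y,z)\<in>C"
        using D[OF xx' Suc.prems(3)] by metis
      have "(z,u) \<in> (C \<union> C\<inverse>)^^(Suc m')"
        using relpow_Suc_I2[of z y "C \<union> C\<inverse>" u m'] z2 Suc.prems(4) by auto
      then show ?thesis
        using Suc.IH[where x=x' and t=t and y=z and u=u and m'="Suc m'"] Suc.prems x't z1 by auto
    qed
  qed
  show ?case using less.prems
  proof (induction m arbitrary: x k)
    case 0
    then have "(u,t) \<in> C\<^sup>*" using relpow_imp_rtrancl by auto
    then have "(u,t) \<in> E\<^sup>*" using rtrancl_mono[OF CE] by auto
    then show ?case using 0 by auto
  next
    case (Suc m)
    from Suc.prems(3) obtain y where xy: "(x,y) \<in> C \<union> C\<inverse>" and yu: "(y,u) \<in> (C \<union> C\<inverse>)^^m"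
      using relpow_Suc_D2 by metis
    show ?case
    proof (cases "(x,y) \<in> C")
      case True
      then show ?thesis using F[OF _ Suc.prems(2) True yu Suc.prems(4)] Suc.prems(1) by auto
    next
      case False
      then have "(y,x) \<in> C" using xy by auto
      then have "(y,t) \<in> C^^(Suc k)" using relpow_Suc_I2 Suc.prems(2) by metis
      then show ?thesis using Suc.IH[where k="Suc k" and x=y] Suc.prems yu by auto
    qed
  qed
qed

lemma core:
  assumes CE: "C \<subseteq> E"
    and D: "\<And>a b c. (a,b)\<in>C \<Longrightarrow> (a,c)\<in>C \<Longrightarrow> b\<noteq>c \<Longrightarrow> \<exists>z. (b,z)\<in>C \<and> (c,z)\<in>C"
    and W: "(t,u) \<in> (C \<union> C\<inverse>)\<^sup>*" and N: "(u,t) \<notin> E\<^sup>*"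
  shows "\<exists>y. (t,y) \<in> C"
proof -
  obtain m where "(t,u) \<in> (C \<union> C\<inverse>)^^m" using W rtrancl_imp_relpow by metis
  then show ?thesis using core_aux[OF CE D, where L="0 + m" and x=t and t=t and k=0 and u=u and m=m] N by auto
qed

theorem theorem3p2p4:
  fixes V :: "'a set" and E H :: "('a \<times> 'a) set"
  assumes "finite V"
    and "dgraph V E"
    and "acyclic E"
    and "modular E"
    and "H \<subseteq> E"
    and "ample_edges V E H"
    and "connected_edges H"
  shows "sufficient V E H"
proof -
  define C where "C = completion E H"
  have EV: "E \<subseteq> V \<times> V" using assms(2) unfolding dgraph_def .
  have finE: "finite E" using EV assms(1) finite_subset by blast
  have EE: "complete_set E E" unfolding complete_set_def by auto
  have compl: "complete_set E C"
  proof -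
    let ?F = "{E0. complete_set E E0 \<and> H \<subseteq> E0}"
    have EF: "E \<in> ?F" using EE assms(5) by auto
    have sub: "\<Inter>?F \<subseteq> E" using EF by blast
    have c1: "f1 \<in> \<Inter>?F \<and> f2 \<in> \<Inter>?F"
      if "e1 \<in> \<Inter>?F" "e2 \<in> \<Inter>?F" "f1 \<in> E" "f2 \<in> E"
         "e1 \<noteq> e2 \<and> fst e1 = fst e2 \<and> snd f1 = snd f2 \<and> snd e1 = fst f1 \<and> snd e2 = fst f2"
      for e1 e2 f1 f2
    proof -
      have "f1 \<in> E0 \<and> f2 \<in> E0" if "E0 \<in> ?F" for E0
      proof -
        have "complete_set E E0" "e1 \<in> E0" "e2 \<in> E0" using that \<open>e1 \<in> \<Inter>?F\<close> \<open>e2 \<in> \<Inter>?F\<close> by auto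
        then show ?thesis using \<open>f1 \<in> E\<close> \<open>f2 \<in> E\<close> \<open>e1 \<noteq> e2 \<and> _\<close>
          unfolding complete_set_def by blast
      qed
      then show ?thesis by blast
    qed
    have c2: "e1 \<in> \<Inter>?F \<and> e2 \<in> \<Inter>?F"
      if "f1 \<in> \<Inter>?F" "f2 \<in> \<Inter>?F" "e1 \<in> E" "e2 \<in> E"
         "f1 \<noteq> f2 \<and> snd f1 = snd f2 \<and> fst e1 = fst e2 \<and> snd e1 = fst f1 \<and> snd e2 = fst f2"
      for e1 e2 f1 f2
    proof -
      have "e1 \<in> E0 \<and> e2 \<in> E0" if "E0 \<in> ?F" for E0
      proof -
        have "complete_set E E0" "f1 \<in> E0" "f2 \<in> E0" using that \<open>f1 \<in> \<Inter>?F\<close> \<open>f2 \<in> \<Inter>?F\<close> by auto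
        then show ?thesis using \<open>e1 \<in> E\<close> \<open>e2 \<in> E\<close> \<open>f1 \<noteq> f2 \<and> _\<close>
          unfolding complete_set_def by blast
      qed
      then show ?thesis by blast
    qed
    show ?thesis unfolding C_def completion_def complete_set_def
      using sub c1 c2 by blast
  qed
  have CE: "C \<subseteq> E" using compl unfolding complete_set_def by auto
  have HC: "H \<subseteq> C" unfolding C_def completion_def by auto
  have Dp: "\<exists>z. (b,z)\<in>C \<and> (c,z)\<in>C" if ab: "(a,b)\<in>C" and ac: "(a,c)\<in>C" and bc: "b\<noteq>c" for a b c
  proof -
    have "(a,b)\<in>E" "(a,c)\<in>E" using that CE by auto
    then obtain f1 f2 where f: "f1\<in>E" "f2\<in>E" "snd f1 = snd f2" "b = fst f1" "c = fst f2"
      using assms(4) bc unfolding modular_def by fastforce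
    then have "f1 \<in> C \<and> f2 \<in> C" using compl ab ac bc unfolding complete_set_def
      by (metis fst_conv snd_conv prod.inject)
    then show ?thesis using f by (metis prod.collapse)
  qed
  have Up: "\<exists>z. (b,z)\<in>C\<inverse> \<and> (c,z)\<in>C\<inverse>" if ab: "(a,b)\<in>C\<inverse>" and ac: "(a,c)\<in>C\<inverse>" and bc: "b\<noteq>c" for a b c
  proof -
    have "(b,a)\<in>E" "(c,a)\<in>E" using that CE by auto
    then obtain g1 g2 where g: "g1\<in>E" "g2\<in>E" "fst g1 = fst g2" "snd g1 = b" "snd g2 = c"
      using assms(4) bc unfolding modular_def by fastforce
    moreover have "(b,a) \<in> C" "(c,a) \<in> C" "(b,a) \<noteq> (c,a)" using ab ac bc by auto
    moreover have "\<forall>f1\<in>C. \<forall>f2\<in>C. \<forall>e1\<in>E. \<forall>e2\<in>E.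
        f1 \<noteq> f2 \<and> snd f1 = snd f2 \<and> fst e1 = fst e2 \<and> snd e1 = fst f1 \<and> snd e2 = fst f2
        \<longrightarrow> e1 \<in> C \<and> e2 \<in> C" using compl unfolding complete_set_def by blast
    ultimately have "g1 \<in> C \<and> g2 \<in> C"
      by (metis fst_conv snd_conv)
    then show ?thesis using g by (metis prod.collapse converse_iff)
  qed
  from assms(7) obtain e0 where "e0 \<in> H" unfolding connected_edges_def by auto
  define h0 where "h0 = fst e0"
  have h0H: "h0 \<in> verts_of H" unfolding h0_def verts_of_def using \<open>e0\<in>H\<close> by auto
  have h0V: "h0 \<in> V" using \<open>e0\<in>H\<close> assms(5) EV h0_def by auto
  have Hconn: "(h0,u) \<in> (C \<union> C\<inverse>)\<^sup>*" if "u \<in> verts_of H" for u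
  proof -
    have "(h0,u) \<in> (H \<union> H\<inverse>)\<^sup>*" using assms(7) h0H that unfolding connected_edges_def by auto
    moreover have "H \<union> H\<inverse> \<subseteq> C \<union> C\<inverse>" using HC by auto
    ultimately show ?thesis using rtrancl_mono by blast
  qed
  have amp: "ample_vset V E (verts_of H)" using assms(6) unfolding ample_edges_def .
  have fwd: "\<forall>t. t \<in> V \<longrightarrow> (h0,t) \<in> C\<^sup>* \<longrightarrow> (\<exists>z. is_sink V E z \<and> (t,z) \<in> C\<^sup>*)"
  proof (intro allI)
    fix t
    show "t \<in> V \<longrightarrow> (h0,t) \<in> C\<^sup>* \<longrightarrow> (\<exists>z. is_sink V E z \<and> (t,z) \<in> C\<^sup>*)"
    proof (induction t rule: wf_induct[OF finite_acyclic_wf_converse[OF finE assms(3)]])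
      case (1 t)
      show ?case
      proof (intro impI)
        assume tV: "t \<in> V" and ht: "(h0,t) \<in> C\<^sup>*"
        show "\<exists>z. is_sink V E z \<and> (t,z) \<in> C\<^sup>*"
        proof (cases "is_sink V E t")
          case True then show ?thesis by auto
        next
          case False
          then obtain u where uH: "u \<in> verts_of H" and ut: "(u,t) \<notin> E\<^sup>*"
            using amp tV unfolding ample_vset_def by auto
          have "(t,h0) \<in> (C \<union> C\<inverse>)\<^sup>*"
          proof -
            have "(h0,t) \<in> (C \<union> C\<inverse>)\<^sup>*" using ht rtrancl_mono[of C "C \<union> C\<inverse>"] by auto
            then have "(t,h0) \<in> ((C \<union> C\<inverse>)\<inverse>)\<^sup>*" by (rule rtrancl_converseI)
            moreover have "(C \<union> C\<inverse>)\<inverse> = C \<union> C\<inverse>" by auto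
            ultimately show ?thesis by simp
          qed
          then have tu: "(t,u) \<in> (C \<union> C\<inverse>)\<^sup>*" using Hconn[OF uH] by auto
          have "\<exists>y. (t,y) \<in> C"
          proof (rule core[OF CE _ tu ut])
            fix a b c assume "(a,b)\<in>C" "(a,c)\<in>C" "b\<noteq>c"
            then show "\<exists>z. (b,z)\<in>C \<and> (c,z)\<in>C" by (rule Dp)
          qed
          then obtain y where ty: "(t,y) \<in> C" by blast
          then have "(t,y) \<in> E" "y \<in> V" using CE EV by auto
          moreover have "(h0,y) \<in> C\<^sup>*" using ht ty by auto
          ultimately obtain z where "is_sink V E z" "(y,z) \<in> C\<^sup>*" using 1[rule_format, of y] by auto
          then show ?thesis using ty by (meson converse_rtrancl_into_rtrancl)
        qed
      qed
    qed
  qed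
  have bwd: "\<forall>t. t \<in> V \<longrightarrow> (t,h0) \<in> C\<^sup>* \<longrightarrow> (\<exists>s. is_source V E s \<and> (s,t) \<in> C\<^sup>*)"
  proof (intro allI)
    fix t
    show "t \<in> V \<longrightarrow> (t,h0) \<in> C\<^sup>* \<longrightarrow> (\<exists>s. is_source V E s \<and> (s,t) \<in> C\<^sup>*)"
    proof (induction t rule: wf_induct[OF finite_acyclic_wf[OF finE assms(3)]])
      case (1 t)
      show ?case
      proof (intro impI)
        assume tV: "t \<in> V" and ht: "(t,h0) \<in> C\<^sup>*"
        show "\<exists>s. is_source V E s \<and> (s,t) \<in> C\<^sup>*"
        proof (cases "is_source V E t")
          case True then show ?thesis by auto
        next
          case False
          then obtain w where wH: "w \<in> verts_of H" and tw: "(t,w) \<notin> E\<^sup>*"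
            using amp tV unfolding ample_vset_def by auto
          have "(t,h0) \<in> (C \<union> C\<inverse>)\<^sup>*" using ht rtrancl_mono[of C "C \<union> C\<inverse>"] by auto
          then have "(t,w) \<in> (C \<union> C\<inverse>)\<^sup>*" using Hconn[OF wH] by auto
          then have W: "(t,w) \<in> (C\<inverse> \<union> (C\<inverse>)\<inverse>)\<^sup>*" by (simp add: sup_commute)
          have N: "(w,t) \<notin> (E\<inverse>)\<^sup>*" using tw by (simp add: rtrancl_converse)
          have CE': "C\<inverse> \<subseteq> E\<inverse>" using CE by auto
          have "\<exists>y. (t,y) \<in> C\<inverse>"
          proof (rule core[OF CE' _ W N])
            fix a b c assume "(a,b)\<in>C\<inverse>" "(a,c)\<in>C\<inverse>" "b\<noteq>c"
            then show "\<exists>z. (b,z)\<in>C\<inverse> \<and> (c,z)\<in>C\<inverse>" by (rule Up)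
          qed
          then obtain y where ty: "(t,y) \<in> C\<inverse>" by blast
          then have yt: "(y,t) \<in> C" by auto
          then have "(y,t) \<in> E" "y \<in> V" using CE EV by auto
          moreover have "(y,h0) \<in> C\<^sup>*" using ht yt by auto
          ultimately obtain s where "is_source V E s" "(s,y) \<in> C\<^sup>*" using 1[rule_format, of y] by auto
          then show ?thesis using yt by (meson rtrancl_into_rtrancl)
        qed
      qed
    qed
  qed
  obtain s where s: "is_source V E s" "(s,h0) \<in> C\<^sup>*" using bwd h0V by blast
  obtain z where z: "is_sink V E z" "(h0,z) \<in> C\<^sup>*" using fwd h0V by blast
  show ?thesis unfolding sufficient_def C_def[symmetric] using s z by (meson rtrancl_trans)
qed

end
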